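(* Let $v$ be a typical weight and let $X$ be an initial space such that for every $f\in X$ and $0\le r<1$ the function $f_r(z)=f(rz)$ is in $X$ and $\sup_{0\le r<1}\|f_r\|_X\le C\|f\|_X$ for a constant $C$ independent of $f$. Let $T$ be an intrinsic operator on $\mathcal{H}(\mathbb{D})$ such that $T:X\to\mathcal{B}_v$ is bounded and $Tf_r\in\mathcal{B}_{v,0}$ for all $f\in X$, $0\le r<1$. Then the following are equivalent: (i) $T:X\to\mathcal{B}_v$ is compact; (ii) $T:X\to\mathcal{B}_{v,0}$ is compact; (iii) $\lim_{|z|\to1}v(z)\|T^*K_{z,1}^{\mathcal{B}}\|=0$.
   Context: $\mathcal{H}(\mathbb{D})$ is the space of holomorphic functions on the unit disk $\mathbb{D}$ with the topology $\tau_{uc}$ of uniform convergence on compact subsets. A linear operator $T$ on $\mathcal{H}(\mathbb{D})$ is intrinsic if it maps $\tau_{uc}$-convergent sequences to $\tau_{uc}$-convergent sequences. An initial space is a Banach space $X\subset\mathcal{H}(\mathbb{D})$ containing the polynomials such that every sequence in the closed unit ball of $X$ has a subsequence converging in $\tau_{uc}$ to some function in $X$. A typical weight is a continuous radial $v:\mathbb{D}\to(0,1]$, non-increasing in $|z|$, with $v(z)\to0$ as $|z|\to1$. $\mathcal{B}_v=\{f:\sup_z v(z)|f'(z)|<\infty\}$ with norm $|f(0)|+\sup_z v(z)|f'(z)|$, $\mathcal{B}_{v,0}=\{f:\lim_{|z|\to1}v(z)|f'(z)|=0\}$. $K_{z,1}^{\mathcal{B}}$ is the derivative point evaluation $g\mapsto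 g'(z)$ on $\mathcal{B}_v$ and $T^*:\mathcal{B}_v^*\to X^*$ the adjoint of $T:X\to\mathcal{B}_v$. *)

theory Defs
  imports "HOL-Analysis.Analysis" "HOL-Computational_Algebra.Polynomial"
begin

type_synonym hfun = "complex \<Rightarrow> complex"

text \<open>H(D): holomorphic functions on the unit disc, normalised to be 0 off the disc
  so that each holomorphic function on D has a unique representative.\<close>
definition HD :: "hfun set" where
  "HD = {f. f holomorphic_on ball 0 1 \<and> (\<forall>z. z \<notin> ball 0 1 \<longrightarrow> f z = 0)}"

definition uc_conv :: "(nat \<Rightarrow> hfun) \<Rightarrow> hfun \<Rightarrow> bool" where
  "uc_conv F g \<longleftrightarrow> (\<forall>K. compact K \<and> K \<subseteq> ball 0 1 \<longrightarrow> uniform_limit K F g sequentially)"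

definition intrinsic :: "(hfun \<Rightarrow> hfun) \<Rightarrow> bool" where
  "intrinsic T \<longleftrightarrow>
     (\<forall>f\<in>HD. T f \<in> HD) \<and>
     (\<forall>f\<in>HD. \<forall>g\<in>HD. T (\<lambda>z. f z + g z) = (\<lambda>z. T f z + T g z)) \<and>
     (\<forall>f\<in>HD. \<forall>c. T (\<lambda>z. c * f z) = (\<lambda>z. c * T f z)) \<and>
     (\<forall>F f. (\<forall>n. F n \<in> HD) \<and> f \<in> HD \<and> uc_conv F f \<longrightarrow>
            (\<exists>g\<in>HD. uc_conv (\<lambda>n. T (F n)) g))"

definition polyD :: "complex poly \<Rightarrow> hfun" where
  "polyD p = (\<lambda>z. if z \<in> ball 0 1 then poly p z else 0)"

definition dil :: "real \<Rightarrow> hfun \<Rightarrow> hfun" where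
  "dil r f = (\<lambda>z. if z \<in> ball 0 1 then f (of_real r * z) else 0)"

definition banach_subspace :: "hfun set \<Rightarrow> (hfun \<Rightarrow> real) \<Rightarrow> bool" where
  "banach_subspace X nX \<longleftrightarrow>
     X \<subseteq> HD \<and> (\<lambda>z. 0) \<in> X \<and>
     (\<forall>f\<in>X. \<forall>g\<in>X. (\<lambda>z. f z + g z) \<in> X) \<and>
     (\<forall>f\<in>X. \<forall>c. (\<lambda>z. c * f z) \<in> X) \<and>
     (\<forall>f\<in>X. 0 \<le> nX f) \<and>
     (\<forall>f\<in>X. nX f = 0 \<longleftrightarrow> f = (\<lambda>z. 0)) \<and>
     (\<forall>f\<in>X. \<forall>c. nX (\<lambda>z. c * f z) = cmod c * nX f) \<and>
     (\<forall>f\<in>X. \<forall>g\<in>X. nX (\<lambda>z. f z + g z) \<le> nX f + nX g) \<and>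
     (\<forall>F. (\<forall>n. F n \<in> X) \<and>
          (\<forall>e>0. \<exists>N. \<forall>m\<ge>N. \<forall>n\<ge>N. nX (\<lambda>z. F m z - F n z) < e) \<longrightarrow>
          (\<exists>f\<in>X. (\<lambda>n. nX (\<lambda>z. F n z - f z)) \<longlonglongrightarrow> 0))"

definition initial_space :: "hfun set \<Rightarrow> (hfun \<Rightarrow> real) \<Rightarrow> bool" where
  "initial_space X nX \<longleftrightarrow>
     banach_subspace X nX \<and>
     (\<forall>p. polyD p \<in> X) \<and>
     (\<forall>F. (\<forall>n. F n \<in> X \<and> nX (F n) \<le> 1) \<longrightarrow>
          (\<exists>(\<phi>::nat\<Rightarrow>nat) g. strict_mono \<phi> \<and> g \<in> X \<and> uc_conv (F \<circ> \<phi>) g))"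

definition typical_weight :: "(complex \<Rightarrow> real) \<Rightarrow> bool" where
  "typical_weight v \<longleftrightarrow>
     continuous_on (ball 0 1) v \<and>
     (\<forall>z\<in>ball 0 1. 0 < v z \<and> v z \<le> 1) \<and>
     (\<forall>z\<in>ball 0 1. \<forall>w\<in>ball 0 1. cmod z = cmod w \<longrightarrow> v z = v w) \<and>
     (\<forall>z\<in>ball 0 1. \<forall>w\<in>ball 0 1. cmod z \<le> cmod w \<longrightarrow> v w \<le> v z) \<and>
     (\<forall>e>0. \<exists>\<rho><1. \<forall>z. \<rho> < cmod z \<and> cmod z < 1 \<longrightarrow> v z < e)"

definition Bv :: "(complex \<Rightarrow> real) \<Rightarrow> hfun set" where
  "Bv v = {f \<in> HD. bdd_above ((\<lambda>z. v z * cmod (deriv f z)) ` ball 0 1)}"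

definition Bv_norm :: "(complex \<Rightarrow> real) \<Rightarrow> hfun \<Rightarrow> real" where
  "Bv_norm v f = cmod (f 0) + (SUP z\<in>ball 0 1. v z * cmod (deriv f z))"

definition Bv0 :: "(complex \<Rightarrow> real) \<Rightarrow> hfun set" where
  "Bv0 v = {f \<in> Bv v. \<forall>e>0. \<exists>\<rho><1. \<forall>z. \<rho> < cmod z \<and> cmod z < 1 \<longrightarrow>
                 v z * cmod (deriv f z) < e}"

definition compact_op :: "(hfun \<Rightarrow> hfun) \<Rightarrow> hfun set \<Rightarrow> (hfun \<Rightarrow> real) \<Rightarrow>
                          (complex \<Rightarrow> real) \<Rightarrow> hfun set \<Rightarrow> bool" where
  "compact_op T X nX v Y \<longleftrightarrow>
     (\<forall>f\<in>X. T f \<in> Y) \<and>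
     (\<forall>F. (\<forall>n. F n \<in> X \<and> nX (F n) \<le> 1) \<longrightarrow>
          (\<exists>(\<phi>::nat\<Rightarrow>nat) g. strict_mono \<phi> \<and> g \<in> Y \<and>
                 (\<lambda>n. Bv_norm v (\<lambda>z. T (F (\<phi> n)) z - g z)) \<longlonglongrightarrow> 0))"

text \<open>Norm of T^* K_{z,1}: the norm of the functional f \<mapsto> (Tf)'(z) on X.\<close>
definition adj_Kz_norm :: "(hfun \<Rightarrow> hfun) \<Rightarrow> hfun set \<Rightarrow> (hfun \<Rightarrow> real) \<Rightarrow> complex \<Rightarrow> real" where
  "adj_Kz_norm T X nX z = (SUP f\<in>{f\<in>X. nX f \<le> 1}. cmod (deriv (T f) z))"

end

theory Submission
  imports Defs "HOL-Complex_Analysis.Complex_Analysis"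
begin

lemma HD_holo: "f \<in> HD \<Longrightarrow> f holomorphic_on ball 0 1" by (simp add: HD_def)
lemma HD_out: "f \<in> HD \<Longrightarrow> z \<notin> ball 0 1 \<Longrightarrow> f z = 0" by (simp add: HD_def)
lemma HD_diff: "f \<in> HD \<Longrightarrow> g \<in> HD \<Longrightarrow> (\<lambda>z. f z - g z) \<in> HD"
  unfolding HD_def by (auto intro: holomorphic_on_diff)
lemma HD_cmult: "f \<in> HD \<Longrightarrow> (\<lambda>z. c * f z) \<in> HD"
  unfolding HD_def by (auto intro: holomorphic_on_mult holomorphic_on_const)
lemma HD_fd: "f \<in> HD \<Longrightarrow> z \<in> ball 0 1 \<Longrightarrow> f field_differentiable (at z)"
  by (rule holomorphic_on_imp_differentiable_at[OF HD_holo open_ball])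
lemma HD_deriv_diff: "f \<in> HD \<Longrightarrow> g \<in> HD \<Longrightarrow> z \<in> ball 0 1 \<Longrightarrow>
   deriv (\<lambda>w. f w - g w) z = deriv f z - deriv g z"
  by (rule deriv_diff[OF HD_fd HD_fd])
lemma HD_deriv_cmult: "f \<in> HD \<Longrightarrow> z \<in> ball 0 1 \<Longrightarrow>
   deriv (\<lambda>w. c * f w) z = c * deriv f z"
  by (rule deriv_cmult[OF HD_fd])

lemma tw_pos: "typical_weight v \<Longrightarrow> z \<in> ball 0 1 \<Longrightarrow> 0 < v z"
  unfolding typical_weight_def by blast
lemma tw_le1: "typical_weight v \<Longrightarrow> z \<in> ball 0 1 \<Longrightarrow> v z \<le> 1"
  unfolding typical_weight_def by blast

lemma Bv_pt:
  assumes "typical_weight v" "h \<in> Bv v" "z \<in> ball 0 1"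
  shows "v z * cmod (deriv h z) \<le> Bv_norm v h - cmod (h 0)"
proof -
  have "bdd_above ((\<lambda>z. v z * cmod (deriv h z)) ` ball 0 1)" using assms(2) by (simp add: Bv_def)
  then have "v z * cmod (deriv h z) \<le> (SUP z\<in>ball 0 1. v z * cmod (deriv h z))"
    using assms(3) by (rule cSUP_upper2) simp
  then show ?thesis by (simp add: Bv_norm_def)
qed

lemma Bv_pt2:
  assumes "typical_weight v" "h \<in> Bv v" "z \<in> ball 0 1"
  shows "v z * cmod (deriv h z) \<le> Bv_norm v h"
  using Bv_pt[OF assms] norm_ge_zero[of "h 0"] by linarith

lemma Bv_zero:
  assumes "typical_weight v" "h \<in> Bv v"
  shows "cmod (h 0) \<le> Bv_norm v h"
proof -
  have "0 \<le> v 0 * cmod (deriv h 0)" using tw_pos[OF assms(1), of 0] by simp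
  with Bv_pt[OF assms, of 0] show ?thesis by simp
qed

lemma Bv_norm_nonneg:
  assumes "typical_weight v" "h \<in> Bv v"
  shows "0 \<le> Bv_norm v h"
  using Bv_zero[OF assms] norm_ge_zero order_trans by blast

lemma Bv_norm_le:
  assumes "\<And>z. z \<in> ball 0 1 \<Longrightarrow> v z * cmod (deriv h z) \<le> B"
  shows "Bv_norm v h \<le> cmod (h 0) + B"
proof -
  have "(SUP z\<in>ball 0 1. v z * cmod (deriv h z)) \<le> B"
    by (rule cSUP_least) (auto intro: assms)
  then show ?thesis by (simp add: Bv_norm_def)
qed

lemma Bv_diff:
  assumes "typical_weight v" "a \<in> Bv v" "b \<in> Bv v"
  shows "(\<lambda>z. a z - b z) \<in> Bv v"
proof -
  have HD: "a \<in> HD" "b \<in> HD" using assms by (auto simp: Bv_def)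
  have "v z * cmod (deriv (\<lambda>w. a w - b w) z) \<le> Bv_norm v a + Bv_norm v b" if "z \<in> ball 0 1" for z
  proof -
    have "v z * cmod (deriv (\<lambda>w. a w - b w) z) = v z * cmod (deriv a z - deriv b z)"
      using HD that by (simp add: HD_deriv_diff)
    also have "\<dots> \<le> v z * cmod (deriv a z) + v z * cmod (deriv b z)"
      using tw_pos[OF assms(1) that] norm_triangle_ineq4[of "deriv a z" "deriv b z"]
      by (simp add: distrib_left[symmetric] mult_left_mono)
    also have "\<dots> \<le> Bv_norm v a + Bv_norm v b"
      using Bv_pt2[OF assms(1,2) that] Bv_pt2[OF assms(1,3) that] by simp
    finally show ?thesis .
  qed
  then have "bdd_above ((\<lambda>z. v z * cmod (deriv (\<lambda>w. a w - b w) z)) ` ball 0 1)" by (rule bdd_aboveI2)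
  then show ?thesis unfolding Bv_def mem_Collect_eq by (intro conjI HD_diff[OF HD])
qed

lemma Bv_cmult:
  assumes "typical_weight v" "a \<in> Bv v"
  shows "(\<lambda>z. c * a z) \<in> Bv v"
proof -
  have HD: "a \<in> HD" using assms by (auto simp: Bv_def)
  have "v z * cmod (deriv (\<lambda>w. c * a w) z) \<le> cmod c * Bv_norm v a" if "z \<in> ball 0 1" for z
  proof -
    have "v z * cmod (deriv (\<lambda>w. c * a w) z) = cmod c * (v z * cmod (deriv a z))"
      using HD that by (simp add: HD_deriv_cmult norm_mult)
    also have "\<dots> \<le> cmod c * Bv_norm v a"
      using Bv_pt2[OF assms that] by (simp add: mult_left_mono)
    finally show ?thesis .
  qed
  then have "bdd_above ((\<lambda>z. v z * cmod (deriv (\<lambda>w. c * a w) z)) ` ball 0 1)" by (rule bdd_aboveI2)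
  then show ?thesis unfolding Bv_def mem_Collect_eq by (intro conjI HD_cmult[OF HD])
qed

lemma Bv0_cmult:
  assumes "typical_weight v" "a \<in> Bv0 v"
  shows "(\<lambda>z. c * a z) \<in> Bv0 v"
proof -
  have a: "a \<in> Bv v" using assms(2) unfolding Bv0_def by blast
  have HD: "a \<in> HD" using a unfolding Bv_def by blast
  have a0: "\<forall>e>0. \<exists>\<rho><1. \<forall>z. \<rho> < cmod z \<and> cmod z < 1 \<longrightarrow> v z * cmod (deriv a z) < e"
    using assms(2) unfolding Bv0_def by blast
  have cpos: "0 < cmod c + 1" using norm_ge_zero[of c] by linarith
  have main: "\<exists>\<rho><1. \<forall>z. \<rho> < cmod z \<and> cmod z < 1 \<longrightarrow> v z * cmod (deriv (\<lambda>w. c * a w) z) < e"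
    if e: "e > 0" for e
  proof -
    have pos: "e / (cmod c + 1) > 0" using e cpos by (intro divide_pos_pos)
    obtain \<rho> where \<rho>: "\<rho> < 1" "\<forall>z. \<rho> < cmod z \<and> cmod z < 1 \<longrightarrow> v z * cmod (deriv a z) < e / (cmod c + 1)"
      using a0[rule_format, OF pos] by blast
    show ?thesis
    proof (intro exI[of _ \<rho>] conjI allI impI)
      fix z assume z: "\<rho> < cmod z \<and> cmod z < 1"
      then have zb: "z \<in> ball 0 1" by simp
      have "v z * cmod (deriv (\<lambda>w. c * a w) z) = cmod c * (v z * cmod (deriv a z))"
        using HD zb by (simp add: HD_deriv_cmult norm_mult)
      also have "\<dots> \<le> (cmod c + 1) * (v z * cmod (deriv a z))"
        using tw_pos[OF assms(1) zb] by (intro mult_right_mono) auto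
      also have "\<dots> < (cmod c + 1) * (e / (cmod c + 1))"
        using \<rho>(2) z cpos by (intro mult_strict_left_mono) auto
      also have "\<dots> = e" using cpos by (simp add: field_simps)
      finally show "v z * cmod (deriv (\<lambda>w. c * a w) z) < e" .
    qed (use \<rho> in auto)
  qed
  have "(\<lambda>z. c * a z) \<in> Bv v" by (rule Bv_cmult[OF assms(1) a])
  moreover have "\<forall>e>0. \<exists>\<rho><1. \<forall>z. \<rho> < cmod z \<and> cmod z < 1 \<longrightarrow> v z * cmod (deriv (\<lambda>w. c * a w) z) < e"
  proof (intro allI impI)
    fix e :: real assume "e > 0" then show "\<exists>\<rho><1. \<forall>z. \<rho> < cmod z \<and> cmod z < 1 \<longrightarrow> v z * cmod (deriv (\<lambda>w. c * a w) z) < e"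
      by (rule main)
  qed
  ultimately show ?thesis unfolding Bv0_def mem_Collect_eq by (rule conjI)
qed

lemma intr_HD: "intrinsic T \<Longrightarrow> f \<in> HD \<Longrightarrow> T f \<in> HD"
  unfolding intrinsic_def by blast
lemma intr_cmult: "intrinsic T \<Longrightarrow> f \<in> HD \<Longrightarrow> T (\<lambda>z. c * f z) = (\<lambda>z. c * T f z)"
  unfolding intrinsic_def by blast
lemma intr_seq: "intrinsic T \<Longrightarrow> (\<forall>n. F n \<in> HD) \<Longrightarrow> f \<in> HD \<Longrightarrow> uc_conv F f \<Longrightarrow>
   \<exists>g\<in>HD. uc_conv (\<lambda>n. T (F n)) g"
  unfolding intrinsic_def by blast

lemma uc_pt:
  assumes "uc_conv F f" "z \<in> ball 0 1"
  shows "(\<lambda>n. F n z) \<longlonglongrightarrow> f z"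
proof -
  have "compact {z} \<and> {z} \<subseteq> ball 0 1" using assms(2) by simp
  then have "uniform_limit {z} F f sequentially"
    using assms(1) unfolding uc_conv_def by blast
  then show ?thesis
  proof (intro tendstoI)
    fix e :: real assume "uniform_limit {z} F f sequentially" "e > 0"
    then have "\<forall>\<^sub>F n in sequentially. \<forall>x\<in>{z}. dist (F n x) (f x) < e"
      by (rule uniform_limitD)
    then show "\<forall>\<^sub>F n in sequentially. dist (F n z) (f z) < e" by simp
  qed
qed

lemma uc_subseq:
  assumes "uc_conv F f" "strict_mono \<phi>"
  shows "uc_conv (F \<circ> \<phi>) f"
  unfolding uc_conv_def
proof (intro allI impI)
  fix K :: "complex set" assume "compact K \<and> K \<subseteq> ball 0 1"
  then have "uniform_limit K F f sequentially" using assms(1) unfolding uc_conv_def by blast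
  then show "uniform_limit K (F \<circ> \<phi>) f sequentially"
    unfolding comp_def by (rule filterlim_compose[OF _ filterlim_subseq[OF assms(2)]])
qed

lemma uc_unique:
  assumes "uc_conv F f" "uc_conv F g" "f \<in> HD" "g \<in> HD"
  shows "f = g"
proof
  fix z show "f z = g z"
  proof (cases "z \<in> ball 0 1")
    case True
    show ?thesis using LIMSEQ_unique[OF uc_pt[OF assms(1) True] uc_pt[OF assms(2) True]] .
  next
    case False
    then show ?thesis using HD_out[OF assms(3)] HD_out[OF assms(4)] by simp
  qed
qed

lemma uc_deriv:
  assumes "\<forall>n. F n \<in> HD" "uc_conv F f" "z \<in> ball 0 1"
  shows "(\<lambda>n. deriv (F n) z) \<longlonglongrightarrow> deriv f z"
proof -
  define r where "r = (1 - cmod z) / 2"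
  have r: "r > 0" using assms(3) by (simp add: r_def)
  have sub: "cball z r \<subseteq> ball 0 1"
  proof
    fix w assume "w \<in> cball z r"
    then have "cmod (w - z) \<le> r" by (simp add: dist_norm norm_minus_commute)
    then have "cmod w \<le> cmod z + r" using norm_triangle_ineq2[of w z] by linarith
    moreover have "cmod z < 1" using assms(3) by simp
    ultimately have "cmod w < 1" unfolding r_def by (simp add: field_simps)
    then show "w \<in> ball 0 1" by simp
  qed
  have "uniform_limit (cball z r) F f sequentially"
    using assms(2) sub unfolding uc_conv_def by (meson compact_cball)
  then have ul: "uniform_limit (ball z r) F f sequentially"
    by (rule uniform_limit_on_subset) (rule ball_subset_cball)
  have hol: "\<forall>\<^sub>F n in sequentially. F n holomorphic_on ball z r"
  proof (intro always_eventually allI)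
    fix n
    have "ball z r \<subseteq> ball 0 1" using sub ball_subset_cball by blast
    then show "F n holomorphic_on ball z r"
      using HD_holo[of "F n"] assms(1) holomorphic_on_subset by blast
  qed
  show ?thesis
    by (rule deriv_complex_uniform_limit[OF ul hol sequentially_bot open_ball]) (simp add: r)
qed

lemma uc_interleave:
  assumes "uc_conv F f"
  shows "uc_conv (\<lambda>n. if even n then F (n div 2) else f) f"
  unfolding uc_conv_def
proof (intro allI impI)
  fix K :: "complex set" assume "compact K \<and> K \<subseteq> ball 0 1"
  then have ul: "uniform_limit K F f sequentially" using assms(1) unfolding uc_conv_def by blast
  show "uniform_limit K (\<lambda>n. if even n then F (n div 2) else f) f sequentially"
  proof (rule uniform_limitI)
    fix e :: real assume e: "e > 0"
    obtain N where N: "\<And>n. n \<ge> N \<Longrightarrow> \<forall>x\<in>K. dist (F n x) (f x) < e"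
      using uniform_limitD[OF ul e] unfolding eventually_sequentially by blast
    show "\<forall>\<^sub>F n in sequentially. \<forall>x\<in>K. dist ((if even n then F (n div 2) else f) x) (f x) < e"
      unfolding eventually_sequentially
    proof (intro exI[of _ "2 * N"] allI impI)
      fix n assume "2 * N \<le> n"
      then have "n div 2 \<ge> N" by simp
      then show "\<forall>x\<in>K. dist ((if even n then F (n div 2) else f) x) (f x) < e"
        using N e by auto
    qed
  qed
qed

lemma intr_cont:
  assumes T: "intrinsic T" and F: "\<forall>n. F n \<in> HD" and f: "f \<in> HD" and c: "uc_conv F f"
  shows "uc_conv (\<lambda>n. T (F n)) (T f)"
proof -
  define G where "G = (\<lambda>n. if even n then F (n div 2) else f)"
  have G: "\<forall>n. G n \<in> HD" using F f by (simp add: G_def)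
  have cG: "uc_conv G f" unfolding G_def by (rule uc_interleave[OF c])
  obtain g where g: "g \<in> HD" "uc_conv (\<lambda>n. T (G n)) g"
    using intr_seq[OF T G f cG] by blast
  have sm1: "strict_mono (\<lambda>n::nat. 2 * n + 1)" by (rule strict_monoI) simp
  have sm2: "strict_mono (\<lambda>n::nat. 2 * n)" by (rule strict_monoI) simp
  have e1: "(\<lambda>n. T (G n)) \<circ> (\<lambda>n. 2 * n + 1) = (\<lambda>n. T f)" by (rule ext) (simp add: G_def)
  have e2: "(\<lambda>n. T (G n)) \<circ> (\<lambda>n. 2 * n) = (\<lambda>n. T (F n))" by (rule ext) (simp add: G_def)
  have c1: "uc_conv (\<lambda>n. T f) g" using uc_subseq[OF g(2) sm1] unfolding e1 .
  have c2: "uc_conv (\<lambda>n. T (F n)) g" using uc_subseq[OF g(2) sm2] unfolding e2 .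
  have "g = T f"
  proof
    fix z show "g z = T f z"
    proof (cases "z \<in> ball 0 1")
      case True
      from uc_pt[OF c1 True] show ?thesis by (simp add: LIMSEQ_const_iff)
    next
      case False
      then show ?thesis using HD_out[OF g(1)] HD_out[OF intr_HD[OF T f]] by simp
    qed
  qed
  then show ?thesis using c2 by simp
qed

lemma Bv_HD: "h \<in> Bv v \<Longrightarrow> h \<in> HD" unfolding Bv_def by blast
lemma Bv0_Bv: "h \<in> Bv0 v \<Longrightarrow> h \<in> Bv v" unfolding Bv0_def by blast
lemma Bv0_lim: "h \<in> Bv0 v \<Longrightarrow> e > 0 \<Longrightarrow>
   \<exists>\<rho><1. \<forall>z. \<rho> < cmod z \<and> cmod z < 1 \<longrightarrow> v z * cmod (deriv h z) < e"
  unfolding Bv0_def by blast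
lemma Bv0I:
  assumes "h \<in> Bv v" "\<And>e. e > 0 \<Longrightarrow> \<exists>\<rho><1. \<forall>z. \<rho> < cmod z \<and> cmod z < 1 \<longrightarrow> v z * cmod (deriv h z) < e"
  shows "h \<in> Bv0 v"
proof -
  have "\<forall>e>0. \<exists>\<rho><1. \<forall>z. \<rho> < cmod z \<and> cmod z < 1 \<longrightarrow> v z * cmod (deriv h z) < e"
  proof (intro allI impI)
    fix e :: real assume "e > 0" then show "\<exists>\<rho><1. \<forall>z. \<rho> < cmod z \<and> cmod z < 1 \<longrightarrow> v z * cmod (deriv h z) < e"
      by (rule assms(2))
  qed
  with assms(1) show ?thesis unfolding Bv0_def mem_Collect_eq by (rule conjI)
qed

lemma Bv_conv_deriv:
  assumes v: "typical_weight v" and H: "\<And>n. H n \<in> Bv v" and g: "g \<in> Bv v"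
    and lim: "(\<lambda>n. Bv_norm v (\<lambda>z. H n z - g z)) \<longlonglongrightarrow> 0" and z: "z \<in> ball 0 1"
  shows "(\<lambda>n. deriv (H n) z) \<longlonglongrightarrow> deriv g z"
proof -
  have vz: "v z > 0" by (rule tw_pos[OF v z])
  have "(\<lambda>n. deriv (H n) z - deriv g z) \<longlonglongrightarrow> 0"
  proof (rule Lim_null_comparison)
    show "(\<lambda>n. Bv_norm v (\<lambda>z. H n z - g z) / v z) \<longlonglongrightarrow> 0"
      by (rule tendsto_divide_zero[OF lim])
    show "\<forall>\<^sub>F n in sequentially. norm (deriv (H n) z - deriv g z) \<le> Bv_norm v (\<lambda>z. H n z - g z) / v z"
    proof (intro always_eventually allI)
      fix n
      have "v z * cmod (deriv (\<lambda>w. H n w - g w) z) \<le> Bv_norm v (\<lambda>z. H n z - g z)"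
        by (rule Bv_pt2[OF v Bv_diff[OF v H g] z])
      moreover have "deriv (\<lambda>w. H n w - g w) z = deriv (H n) z - deriv g z"
        by (rule HD_deriv_diff[OF Bv_HD[OF H] Bv_HD[OF g] z])
      ultimately show "norm (deriv (H n) z - deriv g z) \<le> Bv_norm v (\<lambda>z. H n z - g z) / v z"
        using vz by (simp add: field_simps)
    qed
  qed
  then show ?thesis by (rule LIM_zero_cancel)
qed

lemma Bv_conv_zero:
  assumes v: "typical_weight v" and H: "\<And>n. H n \<in> Bv v" and g: "g \<in> Bv v"
    and lim: "(\<lambda>n. Bv_norm v (\<lambda>z. H n z - g z)) \<longlonglongrightarrow> 0"
  shows "(\<lambda>n. H n 0) \<longlonglongrightarrow> g 0"
proof -
  have "(\<lambda>n. H n 0 - g 0) \<longlonglongrightarrow> 0"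
  proof (rule Lim_null_comparison[OF _ lim])
    show "\<forall>\<^sub>F n in sequentially. norm (H n 0 - g 0) \<le> Bv_norm v (\<lambda>z. H n z - g z)"
      using Bv_zero[OF v Bv_diff[OF v H g]] by simp
  qed
  then show ?thesis by (rule LIM_zero_cancel)
qed

lemma HD_eq_deriv:
  assumes "g \<in> HD" "h \<in> HD" "\<And>z. z \<in> ball 0 1 \<Longrightarrow> deriv g z = deriv h z" "g 0 = h 0"
  shows "g = h"
proof -
  define d where "d = (\<lambda>z. g z - h z)"
  have dHD: "d \<in> HD" unfolding d_def by (rule HD_diff[OF assms(1,2)])
  have "\<exists>c. \<forall>x\<in>ball 0 1. d x = (c::complex)"
  proof (rule has_field_derivative_zero_constant[OF convex_ball])
    fix x :: complex assume x: "x \<in> ball 0 1"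
    have "(d has_field_derivative deriv d x) (at x)"
      using HD_fd[OF dHD x] DERIV_deriv_iff_field_differentiable by blast
    moreover have "deriv d x = 0"
      unfolding d_def using HD_deriv_diff[OF assms(1,2) x] assms(3)[OF x] by simp
    ultimately show "(d has_field_derivative 0) (at x within ball 0 1)"
      using has_field_derivative_at_within by fastforce
  qed
  then obtain c where c: "\<forall>x\<in>ball 0 1. d x = c" by blast
  have "d 0 = 0" unfolding d_def using assms(4) by simp
  then have c0: "c = 0" using c by simp
  show ?thesis
  proof
    fix z show "g z = h z"
    proof (cases "z \<in> ball 0 1")
      case True then show ?thesis using c c0 unfolding d_def by simp
    next
      case False then show ?thesis using HD_out[OF assms(1)] HD_out[OF assms(2)] by simp
    qed
  qed
qed

lemma Bv_ident:
  assumes v: "typical_weight v" and H: "\<And>n. H n \<in> Bv v" and g: "g \<in> Bv v"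
    and lim: "(\<lambda>n. Bv_norm v (\<lambda>z. H n z - g z)) \<longlonglongrightarrow> 0"
    and h: "h \<in> HD" and uc: "uc_conv H h"
  shows "g = h"
proof (rule HD_eq_deriv[OF Bv_HD[OF g] h])
  have HH: "\<forall>n. H n \<in> HD" using H Bv_HD by blast
  show "deriv g z = deriv h z" if z: "z \<in> ball 0 1" for z
    using LIMSEQ_unique[OF Bv_conv_deriv[OF v H g lim z] uc_deriv[OF HH uc z]] .
  have z0: "(0::complex) \<in> ball 0 1" by simp
  show "g 0 = h 0"
    using LIMSEQ_unique[OF Bv_conv_zero[OF v H g lim] uc_pt[OF uc z0]] .
qed

lemma Bv0_closed:
  assumes v: "typical_weight v" and H: "\<And>n. H n \<in> Bv0 v" and g: "g \<in> Bv v"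
    and lim: "(\<lambda>n. Bv_norm v (\<lambda>z. H n z - g z)) \<longlonglongrightarrow> 0"
  shows "g \<in> Bv0 v"
proof (rule Bv0I[OF g])
  fix e :: real assume e: "e > 0"
  have e2: "e / 2 > 0" using e by simp
  have HB: "\<And>n. H n \<in> Bv v" using H Bv0_Bv by blast
  have "\<forall>\<^sub>F n in sequentially. dist (Bv_norm v (\<lambda>z. H n z - g z)) 0 < e / 2"
    using lim e2 by (rule tendstoD)
  then obtain N where "\<forall>n\<ge>N. dist (Bv_norm v (\<lambda>z. H n z - g z)) 0 < e / 2"
    unfolding eventually_sequentially by blast
  then obtain n where n: "dist (Bv_norm v (\<lambda>z. H n z - g z)) 0 < e / 2" by blast
  then have n': "Bv_norm v (\<lambda>z. H n z - g z) < e / 2" by simp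
  obtain \<rho> where \<rho>: "\<rho> < 1" "\<forall>z. \<rho> < cmod z \<and> cmod z < 1 \<longrightarrow> v z * cmod (deriv (H n) z) < e / 2"
    using Bv0_lim[OF H e2] by blast
  show "\<exists>\<rho><1. \<forall>z. \<rho> < cmod z \<and> cmod z < 1 \<longrightarrow> v z * cmod (deriv g z) < e"
  proof (intro exI[of _ \<rho>] conjI allI impI)
    show "\<rho> < 1" by (rule \<rho>(1))
    fix z assume z: "\<rho> < cmod z \<and> cmod z < 1"
    then have zb: "z \<in> ball 0 1" by simp
    have vz: "v z > 0" by (rule tw_pos[OF v zb])
    have d: "deriv (\<lambda>w. H n w - g w) z = deriv (H n) z - deriv g z"
      by (rule HD_deriv_diff[OF Bv_HD[OF HB] Bv_HD[OF g] zb])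
    have b1: "v z * cmod (deriv (\<lambda>w. H n w - g w) z) \<le> Bv_norm v (\<lambda>z. H n z - g z)"
      by (rule Bv_pt2[OF v Bv_diff[OF v HB g] zb])
    have "cmod (deriv g z) = cmod (deriv (H n) z - (deriv (H n) z - deriv g z))" by simp
    also have "\<dots> \<le> cmod (deriv (H n) z) + cmod (deriv (H n) z - deriv g z)"
      by (rule norm_triangle_ineq4)
    finally have "cmod (deriv g z) \<le> cmod (deriv (H n) z) + cmod (deriv (H n) z - deriv g z)" .
    then have "v z * cmod (deriv g z) \<le> v z * cmod (deriv (H n) z) + v z * cmod (deriv (H n) z - deriv g z)"
      using vz by (simp add: distrib_left[symmetric] mult_left_mono)
    also have "\<dots> < e / 2 + e / 2" using \<rho>(2) z b1 d n' by (intro add_less_le_mono) auto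
    finally show "v z * cmod (deriv g z) < e" by simp
  qed
qed

lemma dil_conv:
  assumes f: "f \<in> HD"
  shows "uc_conv (\<lambda>n. dil (real n / real (Suc n)) f) f"
  unfolding uc_conv_def
proof (intro allI impI)
  fix K :: "complex set" assume K: "compact K \<and> K \<subseteq> ball 0 1"
  obtain s where s: "0 \<le> s" "s < 1" "\<forall>z\<in>K. cmod z \<le> s"
  proof (cases "K = {}")
    case True then show ?thesis using that[of 0] by simp
  next
    case False
    obtain x where x: "x \<in> K" "\<forall>y\<in>K. cmod y \<le> cmod x"
      using continuous_attains_sup[OF conjunct1[OF K] False continuous_on_norm_id] by blast
    show ?thesis using that[of "cmod x"] x K by auto
  qed
  have sub: "cball 0 s \<subseteq> ball 0 1" using s by auto
  have "continuous_on (cball 0 s) f"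
    using holomorphic_on_imp_continuous_on[OF HD_holo[OF f]] sub continuous_on_subset by blast
  then have uc: "uniformly_continuous_on (cball 0 s) f"
    by (rule compact_uniformly_continuous) simp
  show "uniform_limit K (\<lambda>n. dil (real n / real (Suc n)) f) f sequentially"
  proof (rule uniform_limitI)
    fix e :: real assume e: "e > 0"
    obtain d where d: "d > 0" "\<forall>x\<in>cball 0 s. \<forall>x'\<in>cball 0 s. dist x' x < d \<longrightarrow> dist (f x') (f x) < e"
      using uc e unfolding uniformly_continuous_on_def by blast
    obtain N :: nat where N: "1 / d < real N" using reals_Archimedean2 by blast
    show "\<forall>\<^sub>F n in sequentially. \<forall>x\<in>K. dist (dil (real n / real (Suc n)) f x) (f x) < e"
      unfolding eventually_sequentially
    proof (intro exI[of _ N] allI impI ballI)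
      fix n x assume n: "N \<le> n" and x: "x \<in> K"
      define r where "r = real n / real (Suc n)"
      have r0: "0 \<le> r" "r \<le> 1" by (auto simp: r_def)
      have r1: "1 - r = 1 / real (Suc n)" by (simp add: r_def field_simps)
      have xb: "x \<in> ball 0 1" using x K by blast
      have xs: "cmod x \<le> s" using s x by blast
      have dileq: "dil r f x = f (of_real r * x)" using xb by (simp add: dil_def)
      have "cmod (of_real r * x) \<le> cmod x" using r0 by (simp add: norm_mult mult_left_le_one_le)
      then have rx: "of_real r * x \<in> cball 0 s" using xs by simp
      have xc: "x \<in> cball 0 s" using xs by simp
      have "dist (of_real r * x) x = cmod (of_real (r - 1) * x)"
        by (simp add: dist_norm algebra_simps)
      also have "\<dots> = \<bar>r - 1\<bar> * cmod x" by (simp only: norm_mult norm_of_real)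
      also have "\<dots> = (1 - r) * cmod x" using r0 by simp
      also have "\<dots> \<le> 1 - r" using r0 xs s by (intro mult_right_le_one_le) auto
      also have "\<dots> = 1 / real (Suc n)" by (rule r1)
      also have "\<dots> < d"
      proof -
        have "1 / d < real (Suc n)" using N n by simp
        then show ?thesis using d by (simp add: field_simps)
      qed
      finally have "dist (of_real r * x) x < d" .
      then have "dist (f (of_real r * x)) (f x) < e" using d(2) rx xc by blast
      then show "dist (dil (real n / real (Suc n)) f x) (f x) < e" using dileq by (simp add: r_def)
    qed
  qed
qed

lemma is_bs: "initial_space X nX \<Longrightarrow> banach_subspace X nX"
  unfolding initial_space_def by blast
lemma is_sub: "initial_space X nX \<Longrightarrow> f \<in> X \<Longrightarrow> f \<in> HD"
  using is_bs unfolding banach_subspace_def by blast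
lemma is_zero_in: "initial_space X nX \<Longrightarrow> (\<lambda>z. 0) \<in> X"
  using is_bs unfolding banach_subspace_def by blast
lemma is_cmult: "initial_space X nX \<Longrightarrow> f \<in> X \<Longrightarrow> (\<lambda>z. c * f z) \<in> X"
  using is_bs unfolding banach_subspace_def by blast
lemma is_nonneg: "initial_space X nX \<Longrightarrow> f \<in> X \<Longrightarrow> 0 \<le> nX f"
  using is_bs unfolding banach_subspace_def by blast
lemma is_norm0: "initial_space X nX \<Longrightarrow> f \<in> X \<Longrightarrow> nX f = 0 \<longleftrightarrow> f = (\<lambda>z. 0)"
  using is_bs unfolding banach_subspace_def by blast
lemma is_norm_cmult: "initial_space X nX \<Longrightarrow> f \<in> X \<Longrightarrow> nX (\<lambda>z. c * f z) = cmod c * nX f"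
  using is_bs unfolding banach_subspace_def by blast
lemma is_compact: "initial_space X nX \<Longrightarrow> (\<forall>n. F n \<in> X \<and> nX (F n) \<le> 1) \<Longrightarrow>
    \<exists>(\<phi>::nat\<Rightarrow>nat) g. strict_mono \<phi> \<and> g \<in> X \<and> uc_conv (F \<circ> \<phi>) g"
  unfolding initial_space_def by blast

lemma co_in: "compact_op T X nX v Y \<Longrightarrow> f \<in> X \<Longrightarrow> T f \<in> Y"
  unfolding compact_op_def by blast
lemma co_seq: "compact_op T X nX v Y \<Longrightarrow> (\<forall>n. F n \<in> X \<and> nX (F n) \<le> 1) \<Longrightarrow>
   \<exists>(\<phi>::nat\<Rightarrow>nat) g. strict_mono \<phi> \<and> g \<in> Y \<and>
                 (\<lambda>n. Bv_norm v (\<lambda>z. T (F (\<phi> n)) z - g z)) \<longlonglongrightarrow> 0"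
  unfolding compact_op_def by blast
lemma coI:
  assumes "\<And>f. f \<in> X \<Longrightarrow> T f \<in> Y"
   and "\<And>F. (\<forall>n. F n \<in> X \<and> nX (F n) \<le> 1) \<Longrightarrow>
   \<exists>(\<phi>::nat\<Rightarrow>nat) g. strict_mono \<phi> \<and> g \<in> Y \<and>
                 (\<lambda>n. Bv_norm v (\<lambda>z. T (F (\<phi> n)) z - g z)) \<longlonglongrightarrow> 0"
  shows "compact_op T X nX v Y"
proof -
  have a: "\<forall>f\<in>X. T f \<in> Y" using assms(1) by blast
  have b: "\<forall>F. (\<forall>n. F n \<in> X \<and> nX (F n) \<le> 1) \<longrightarrow>
          (\<exists>(\<phi>::nat\<Rightarrow>nat) g. strict_mono \<phi> \<and> g \<in> Y \<and>
                 (\<lambda>n. Bv_norm v (\<lambda>z. T (F (\<phi> n)) z - g z)) \<longlonglongrightarrow> 0)"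
  proof (intro allI impI)
    fix F :: "nat \<Rightarrow> hfun" assume "\<forall>n. F n \<in> X \<and> nX (F n) \<le> 1"
    then show "\<exists>(\<phi>::nat\<Rightarrow>nat) g. strict_mono \<phi> \<and> g \<in> Y \<and>
                 (\<lambda>n. Bv_norm v (\<lambda>z. T (F (\<phi> n)) z - g z)) \<longlonglongrightarrow> 0" by (rule assms(2))
  qed
  show ?thesis unfolding compact_op_def using a b by (rule conjI)
qed

lemma part_ii_i:
  assumes "compact_op T X nX v (Bv0 v)"
  shows "compact_op T X nX v (Bv v)"
proof (rule coI)
  fix f assume "f \<in> X" then show "T f \<in> Bv v" using co_in[OF assms] Bv0_Bv by blast
next
  fix F :: "nat \<Rightarrow> hfun" assume "\<forall>n. F n \<in> X \<and> nX (F n) \<le> 1"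
  then obtain \<phi> :: "nat \<Rightarrow> nat" and g where "strict_mono \<phi>" "g \<in> Bv0 v"
     "(\<lambda>n. Bv_norm v (\<lambda>z. T (F (\<phi> n)) z - g z)) \<longlonglongrightarrow> 0"
    using co_seq[OF assms] by blast
  then show "\<exists>(\<phi>::nat\<Rightarrow>nat) g. strict_mono \<phi> \<and> g \<in> Bv v \<and>
                 (\<lambda>n. Bv_norm v (\<lambda>z. T (F (\<phi> n)) z - g z)) \<longlonglongrightarrow> 0"
    using Bv0_Bv by blast
qed

lemma part_i_A:
  assumes v: "typical_weight v"
    and X: "initial_space X nX"
    and dil: "\<And>f r. f \<in> X \<Longrightarrow> 0 \<le> r \<Longrightarrow> r < 1 \<Longrightarrow> dil r f \<in> X \<and> nX (dil r f) \<le> C * nX f"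
    and T: "intrinsic T"
    and dil0: "\<And>f r. f \<in> X \<Longrightarrow> 0 \<le> r \<Longrightarrow> r < 1 \<Longrightarrow> T (dil r f) \<in> Bv0 v"
    and comp: "compact_op T X nX v (Bv v)"
    and f: "f \<in> X"
  shows "T f \<in> Bv0 v"
proof -
  define K where "K = 1 + \<bar>C\<bar> * nX f"
  have nf: "0 \<le> nX f" by (rule is_nonneg[OF X f])
  have Kpos: "K > 0" unfolding K_def using nf by (simp add: add_pos_nonneg)
  define f0 where "f0 = (\<lambda>z. complex_of_real (1 / K) * f z)"
  have f0X: "f0 \<in> X" unfolding f0_def by (rule is_cmult[OF X f])
  have "nX f0 = cmod (complex_of_real (1/K)) * nX f" unfolding f0_def by (rule is_norm_cmult[OF X f])
  then have nf0: "nX f0 = nX f / K" using Kpos by (simp add: norm_divide)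
  have nf0': "0 \<le> nX f0" by (rule is_nonneg[OF X f0X])
  define r where "r = (\<lambda>n::nat. real n / real (Suc n))"
  have r: "\<And>n. 0 \<le> r n \<and> r n < 1" by (simp add: r_def)
  define F where "F = (\<lambda>n. dil (r n) f0)"
  have FX: "\<forall>n. F n \<in> X \<and> nX (F n) \<le> 1"
  proof
    fix n
    have d: "dil (r n) f0 \<in> X \<and> nX (dil (r n) f0) \<le> C * nX f0" using dil[OF f0X] r by blast
    have "C * nX f0 \<le> \<bar>C\<bar> * nX f0" using nf0' by (simp add: mult_right_mono)
    also have "\<dots> = \<bar>C\<bar> * nX f / K" by (simp add: nf0)
    also have "\<dots> \<le> 1" using Kpos unfolding K_def by (simp add: field_simps)
    finally show "F n \<in> X \<and> nX (F n) \<le> 1" using d unfolding F_def by simp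
  qed
  obtain \<phi> :: "nat \<Rightarrow> nat" and g where phi: "strict_mono \<phi>" and g: "g \<in> Bv v"
     and lim: "(\<lambda>n. Bv_norm v (\<lambda>z. T (F (\<phi> n)) z - g z)) \<longlonglongrightarrow> 0"
    using co_seq[OF comp FX] by blast
  have H0: "\<And>n. T (F (\<phi> n)) \<in> Bv0 v" unfolding F_def using dil0[OF f0X] r by blast
  have HB: "\<And>n. T (F (\<phi> n)) \<in> Bv v" using H0 Bv0_Bv by blast
  have g0: "g \<in> Bv0 v" by (rule Bv0_closed[OF v H0 g lim])
  have f0HD: "f0 \<in> HD" by (rule is_sub[OF X f0X])
  have ucF: "uc_conv F f0" unfolding F_def r_def by (rule dil_conv[OF f0HD])
  have ucF': "uc_conv (\<lambda>n. F (\<phi> n)) f0" using uc_subseq[OF ucF phi] by (simp add: comp_def)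
  have FHD: "\<forall>n. F (\<phi> n) \<in> HD" using FX is_sub[OF X] by blast
  have ucT: "uc_conv (\<lambda>n. T (F (\<phi> n))) (T f0)" by (rule intr_cont[OF T FHD f0HD ucF'])
  have "g = T f0" by (rule Bv_ident[OF v HB g lim intr_HD[OF T f0HD] ucT])
  then have Tf0: "T f0 \<in> Bv0 v" using g0 by simp
  have feq: "f = (\<lambda>z. complex_of_real K * f0 z)"
    unfolding f0_def using Kpos by (simp add: mult.assoc[symmetric] of_real_mult[symmetric])
  have "T f = (\<lambda>z. complex_of_real K * T f0 z)"
    using intr_cmult[OF T f0HD, of "complex_of_real K"] feq by simp
  then show ?thesis using Bv0_cmult[OF v Tf0] by simp
qed

lemma part_i_ii:
  assumes v: "typical_weight v"
    and X: "initial_space X nX"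
    and dil: "\<And>f r. f \<in> X \<Longrightarrow> 0 \<le> r \<Longrightarrow> r < 1 \<Longrightarrow> dil r f \<in> X \<and> nX (dil r f) \<le> C * nX f"
    and T: "intrinsic T"
    and dil0: "\<And>f r. f \<in> X \<Longrightarrow> 0 \<le> r \<Longrightarrow> r < 1 \<Longrightarrow> T (dil r f) \<in> Bv0 v"
    and comp: "compact_op T X nX v (Bv v)"
  shows "compact_op T X nX v (Bv0 v)"
proof (rule coI)
  fix f assume "f \<in> X" then show "T f \<in> Bv0 v" using part_i_A[OF v X dil T dil0 comp] by blast
next
  fix F :: "nat \<Rightarrow> hfun" assume FX: "\<forall>n. F n \<in> X \<and> nX (F n) \<le> 1"
  then obtain \<phi> :: "nat \<Rightarrow> nat" and g where phi: "strict_mono \<phi>" and g: "g \<in> Bv v" and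
     lim: "(\<lambda>n. Bv_norm v (\<lambda>z. T (F (\<phi> n)) z - g z)) \<longlonglongrightarrow> 0"
    using co_seq[OF comp] by blast
  have H0: "\<And>n. T (F (\<phi> n)) \<in> Bv0 v" using FX part_i_A[OF v X dil T dil0 comp] by blast
  have "g \<in> Bv0 v" by (rule Bv0_closed[OF v H0 g lim])
  then show "\<exists>(\<phi>::nat\<Rightarrow>nat) g. strict_mono \<phi> \<and> g \<in> Bv0 v \<and>
                 (\<lambda>n. Bv_norm v (\<lambda>z. T (F (\<phi> n)) z - g z)) \<longlonglongrightarrow> 0"
    using phi lim by blast
qed

lemma adj_bdd:
  assumes v: "typical_weight v" and X: "initial_space X nX" and TBv: "\<forall>f\<in>X. T f \<in> Bv v"
    and M: "\<forall>f\<in>X. Bv_norm v (T f) \<le> M * nX f" and z: "z \<in> ball 0 1"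
  shows "bdd_above ((\<lambda>f. cmod (deriv (T f) z)) ` {f\<in>X. nX f \<le> 1})"
proof (rule bdd_aboveI2)
  fix f assume "f \<in> {f\<in>X. nX f \<le> 1}"
  then have f: "f \<in> X" "nX f \<le> 1" by auto
  have vz: "v z > 0" by (rule tw_pos[OF v z])
  have nf: "0 \<le> nX f" by (rule is_nonneg[OF X f(1)])
  have "v z * cmod (deriv (T f) z) \<le> Bv_norm v (T f)" using Bv_pt2[OF v _ z] TBv f by blast
  also have "\<dots> \<le> M * nX f" using M f by blast
  also have "\<dots> \<le> \<bar>M\<bar> * nX f" using nf by (simp add: mult_right_mono)
  also have "\<dots> \<le> \<bar>M\<bar>" using nf f(2) by (simp add: mult_left_le)
  finally have "v z * cmod (deriv (T f) z) \<le> \<bar>M\<bar>" .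
  then show "cmod (deriv (T f) z) \<le> \<bar>M\<bar> / v z" using vz by (simp add: field_simps)
qed

lemma adj_upper:
  assumes v: "typical_weight v" and X: "initial_space X nX" and TBv: "\<forall>f\<in>X. T f \<in> Bv v"
    and M: "\<forall>f\<in>X. Bv_norm v (T f) \<le> M * nX f" and z: "z \<in> ball 0 1"
    and f: "f \<in> X" "nX f \<le> 1"
  shows "cmod (deriv (T f) z) \<le> adj_Kz_norm T X nX z"
  unfolding adj_Kz_norm_def
  by (rule cSUP_upper[OF _ adj_bdd[OF v X TBv M z]]) (use f in simp)

lemma adj_nonneg:
  assumes v: "typical_weight v" and X: "initial_space X nX" and TBv: "\<forall>f\<in>X. T f \<in> Bv v"
    and M: "\<forall>f\<in>X. Bv_norm v (T f) \<le> M * nX f" and z: "z \<in> ball 0 1"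
  shows "0 \<le> adj_Kz_norm T X nX z"
proof -
  have "(\<lambda>z. 0) \<in> X" by (rule is_zero_in[OF X])
  moreover have "nX (\<lambda>z. 0) = 0" using is_norm0[OF X calculation] by simp
  ultimately have "cmod (deriv (T (\<lambda>z. 0)) z) \<le> adj_Kz_norm T X nX z"
    using adj_upper[OF v X TBv M z] by simp
  then show ?thesis using norm_ge_zero order_trans by blast
qed

lemma adj_large:
  assumes v: "typical_weight v" and X: "initial_space X nX" and TBv: "\<forall>f\<in>X. T f \<in> Bv v"
    and M: "\<forall>f\<in>X. Bv_norm v (T f) \<le> M * nX f" and z: "z \<in> ball 0 1"
    and e: "e > 0" and big: "e \<le> v z * adj_Kz_norm T X nX z"
  shows "\<exists>f. f \<in> X \<and> nX f \<le> 1 \<and> e / 2 < v z * cmod (deriv (T f) z)"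
proof -
  have vz: "v z > 0" by (rule tw_pos[OF v z])
  have "e / (2 * v z) < e / v z" using vz e by (simp add: field_simps)
  also have "\<dots> \<le> adj_Kz_norm T X nX z" using big vz by (simp add: field_simps)
  finally have lt: "e / (2 * v z) < (SUP f\<in>{f\<in>X. nX f \<le> 1}. cmod (deriv (T f) z))"
    unfolding adj_Kz_norm_def .
  have ne: "{f\<in>X. nX f \<le> 1} \<noteq> {}"
  proof -
    have "(\<lambda>z. 0) \<in> X" by (rule is_zero_in[OF X])
    moreover have "nX (\<lambda>z. 0) = 0" using is_norm0[OF X calculation] by simp
    ultimately show ?thesis by auto
  qed
  obtain f where f: "f \<in> {f\<in>X. nX f \<le> 1}" "e / (2 * v z) < cmod (deriv (T f) z)"
    using lt less_cSUP_iff[OF ne adj_bdd[OF v X TBv M z]] by blast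
  have "e / 2 < v z * cmod (deriv (T f) z)" using f(2) vz by (simp add: field_simps)
  then show ?thesis using f(1) by blast
qed

lemma part_ii_iii:
  assumes v: "typical_weight v" and X: "initial_space X nX" and TBv: "\<forall>f\<in>X. T f \<in> Bv v"
    and M: "\<forall>f\<in>X. Bv_norm v (T f) \<le> M * nX f"
    and comp0: "compact_op T X nX v (Bv0 v)"
  shows "\<forall>e>0. \<exists>\<rho><1. \<forall>z. \<rho> < cmod z \<and> cmod z < 1 \<longrightarrow> v z * adj_Kz_norm T X nX z < e"
proof (intro allI impI, rule ccontr)
  fix e :: real assume e: "e > 0"
    and neg: "\<not> (\<exists>\<rho><1. \<forall>z. \<rho> < cmod z \<and> cmod z < 1 \<longrightarrow> v z * adj_Kz_norm T X nX z < e)"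
  have ex: "\<forall>n::nat. \<exists>zf. (1 - 1 / real (Suc n) < cmod (fst zf) \<and> cmod (fst zf) < 1) \<and>
      snd zf \<in> X \<and> nX (snd zf) \<le> 1 \<and> e / 2 < v (fst zf) * cmod (deriv (T (snd zf)) (fst zf))"
  proof
    fix n :: nat
    have "1 - 1 / real (Suc n) < 1" by simp
    then have "\<not> (\<forall>z. 1 - 1 / real (Suc n) < cmod z \<and> cmod z < 1 \<longrightarrow> v z * adj_Kz_norm T X nX z < e)"
      using neg by blast
    then obtain z where z: "1 - 1 / real (Suc n) < cmod z" "cmod z < 1"
        "\<not> v z * adj_Kz_norm T X nX z < e" by blast
    have zb: "z \<in> ball 0 1" using z by simp
    have "e \<le> v z * adj_Kz_norm T X nX z" using z(3) by simp
    then obtain f where f: "f \<in> X" "nX f \<le> 1" "e / 2 < v z * cmod (deriv (T f) z)"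
      using adj_large[OF v X TBv M zb e] by blast
    show "\<exists>zf. (1 - 1 / real (Suc n) < cmod (fst zf) \<and> cmod (fst zf) < 1) \<and>
      snd zf \<in> X \<and> nX (snd zf) \<le> 1 \<and> e / 2 < v (fst zf) * cmod (deriv (T (snd zf)) (fst zf))"
      by (rule exI[of _ "(z, f)"]) (use z f in simp)
  qed
  obtain zf where zf: "\<forall>n::nat. (1 - 1 / real (Suc n) < cmod (fst (zf n)) \<and> cmod (fst (zf n)) < 1) \<and>
      snd (zf n) \<in> X \<and> nX (snd (zf n)) \<le> 1 \<and> e / 2 < v (fst (zf n)) * cmod (deriv (T (snd (zf n))) (fst (zf n)))"
    using choice[OF ex] by blast
  define ff where "ff = (\<lambda>n. snd (zf n))"
  define zz where "zz = (\<lambda>n. fst (zf n))"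
  have FX: "\<forall>n. ff n \<in> X \<and> nX (ff n) \<le> 1" using zf unfolding ff_def by blast
  obtain \<phi> :: "nat \<Rightarrow> nat" and g where phi: "strict_mono \<phi>" and g: "g \<in> Bv0 v"
    and lim: "(\<lambda>n. Bv_norm v (\<lambda>z. T (ff (\<phi> n)) z - g z)) \<longlonglongrightarrow> 0"
    using co_seq[OF comp0 FX] by blast
  have e4: "e / 4 > 0" using e by simp
  obtain \<rho>0 where r0: "\<rho>0 < 1" "\<forall>z. \<rho>0 < cmod z \<and> cmod z < 1 \<longrightarrow> v z * cmod (deriv g z) < e / 4"
    using Bv0_lim[OF g e4] by blast
  have "\<forall>\<^sub>F n in sequentially. dist (Bv_norm v (\<lambda>z. T (ff (\<phi> n)) z - g z)) 0 < e / 4"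
    using lim e4 by (rule tendstoD)
  then obtain N1 where N1: "\<forall>n\<ge>N1. dist (Bv_norm v (\<lambda>z. T (ff (\<phi> n)) z - g z)) 0 < e / 4"
    unfolding eventually_sequentially by blast
  obtain N2 :: nat where N2: "1 / (1 - \<rho>0) < real N2" using reals_Archimedean2 by blast
  define n where "n = max N1 N2"
  define m where "m = \<phi> n"
  have mn: "n \<le> m" unfolding m_def using seq_suble[OF phi] by simp
  have zm: "1 - 1 / real (Suc m) < cmod (zz m)" "cmod (zz m) < 1"
    using zf unfolding zz_def by blast+
  have "1 / (1 - \<rho>0) < real (Suc m)" using N2 mn unfolding n_def by simp
  then have "1 < real (Suc m) * (1 - \<rho>0)" using r0(1) by (simp add: field_simps)
  then have "1 / real (Suc m) < 1 - \<rho>0" by (simp add: field_simps)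
  then have zr: "\<rho>0 < cmod (zz m)" using zm by linarith
  define z where "z = zz m"
  have zb: "z \<in> ball 0 1" using zm unfolding z_def by simp
  have vz: "v z > 0" by (rule tw_pos[OF v zb])
  have hX: "ff m \<in> X" using FX by blast
  have hB: "T (ff m) \<in> Bv v" using TBv hX by blast
  have gB: "g \<in> Bv v" by (rule Bv0_Bv[OF g])
  have big: "e / 2 < v z * cmod (deriv (T (ff m)) z)"
    using zf unfolding z_def zz_def ff_def by blast
  have b1: "v z * cmod (deriv (\<lambda>w. T (ff m) w - g w) z) \<le> Bv_norm v (\<lambda>w. T (ff m) w - g w)"
    by (rule Bv_pt2[OF v Bv_diff[OF v hB gB] zb])
  have d: "deriv (\<lambda>w. T (ff m) w - g w) z = deriv (T (ff m)) z - deriv g z"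
    by (rule HD_deriv_diff[OF Bv_HD[OF hB] Bv_HD[OF gB] zb])
  have "n \<ge> N1" unfolding n_def by simp
  then have "dist (Bv_norm v (\<lambda>z. T (ff (\<phi> n)) z - g z)) 0 < e / 4" using N1 by blast
  then have b2: "Bv_norm v (\<lambda>w. T (ff m) w - g w) < e / 4"
    unfolding m_def by (simp add: dist_real_def abs_less_iff)
  have b3: "v z * cmod (deriv g z) < e / 4" using r0(2) zr zm unfolding z_def by blast
  have "cmod (deriv (T (ff m)) z) = cmod ((deriv (T (ff m)) z - deriv g z) + deriv g z)" by simp
  also have "\<dots> \<le> cmod (deriv (T (ff m)) z - deriv g z) + cmod (deriv g z)" by (rule norm_triangle_ineq)
  finally have "v z * cmod (deriv (T (ff m)) z) \<le> v z * cmod (deriv (T (ff m)) z - deriv g z) + v z * cmod (deriv g z)"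
    using vz by (simp add: distrib_left[symmetric] mult_left_mono)
  also have "\<dots> < e / 4 + e / 4" using b1 b2 b3 d by simp
  finally show False using big by simp
qed

lemma T_zero:
  assumes T: "intrinsic T" shows "T (\<lambda>z. 0) = (\<lambda>z. 0)"
proof -
  have z: "(\<lambda>z::complex. 0::complex) \<in> HD" unfolding HD_def by (simp add: holomorphic_on_const)
  have "T (\<lambda>z. 0 * 0) = (\<lambda>z. 0 * T (\<lambda>z. 0) z)" by (rule intr_cmult[OF T z])
  then show ?thesis by simp
qed

lemma deriv_bound:
  assumes v: "typical_weight v" and X: "initial_space X nX" and T: "intrinsic T"
    and TBv: "\<forall>f\<in>X. T f \<in> Bv v"
    and M: "\<forall>f\<in>X. Bv_norm v (T f) \<le> M * nX f" and z: "z \<in> ball 0 1" and f: "f \<in> X"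
  shows "cmod (deriv (T f) z) \<le> adj_Kz_norm T X nX z * nX f"
proof (cases "nX f = 0")
  case True
  then have "f = (\<lambda>z. 0)" using is_norm0[OF X f] by simp
  then have "T f = (\<lambda>z. 0)" using T_zero[OF T] by simp
  then show ?thesis using True by simp
next
  case False
  define n where "n = nX f"
  have npos: "n > 0" using False is_nonneg[OF X f] unfolding n_def by simp
  define f1 where "f1 = (\<lambda>z. complex_of_real (1 / n) * f z)"
  have f1X: "f1 \<in> X" unfolding f1_def by (rule is_cmult[OF X f])
  have "nX f1 = cmod (complex_of_real (1 / n)) * nX f" unfolding f1_def by (rule is_norm_cmult[OF X f])
  then have nf1: "nX f1 = 1" using npos unfolding n_def by (simp add: norm_divide)
  have up: "cmod (deriv (T f1) z) \<le> adj_Kz_norm T X nX z"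
    using adj_upper[OF v X TBv M z f1X] nf1 by simp
  have f1HD: "f1 \<in> HD" by (rule is_sub[OF X f1X])
  have feq: "f = (\<lambda>z. complex_of_real n * f1 z)"
    unfolding f1_def using npos by (simp add: mult.assoc[symmetric] of_real_mult[symmetric])
  have Tf: "T f = (\<lambda>z. complex_of_real n * T f1 z)"
    using intr_cmult[OF T f1HD, of "complex_of_real n"] feq by simp
  have "deriv (T f) z = complex_of_real n * deriv (T f1) z"
    unfolding Tf by (rule HD_deriv_cmult[OF intr_HD[OF T f1HD] z])
  then have "cmod (deriv (T f) z) = n * cmod (deriv (T f1) z)" using npos by (simp add: norm_mult)
  also have "\<dots> \<le> n * adj_Kz_norm T X nX z" using up npos by (simp add: mult_left_mono)
  finally show ?thesis unfolding n_def by (simp add: mult.commute)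
qed

lemma part_iii_A:
  assumes v: "typical_weight v" and X: "initial_space X nX" and T: "intrinsic T"
    and TBv: "\<forall>f\<in>X. T f \<in> Bv v"
    and M: "\<forall>f\<in>X. Bv_norm v (T f) \<le> M * nX f"
    and H3: "\<forall>e>0. \<exists>\<rho><1. \<forall>z. \<rho> < cmod z \<and> cmod z < 1 \<longrightarrow> v z * adj_Kz_norm T X nX z < e"
    and f: "f \<in> X"
  shows "T f \<in> Bv0 v"
proof (rule Bv0I)
  show "T f \<in> Bv v" using TBv f by blast
  fix e :: real assume e: "e > 0"
  define A where "A = nX f + 1"
  have nf: "0 \<le> nX f" by (rule is_nonneg[OF X f])
  have Apos: "A > 0" unfolding A_def using nf by simp
  have eA: "e / A > 0" using e Apos by simp
  obtain \<rho> where \<rho>: "\<rho> < 1" "\<forall>z. \<rho> < cmod z \<and> cmod z < 1 \<longrightarrow> v z * adj_Kz_norm T X nX z < e / A"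
    using H3 eA by blast
  show "\<exists>\<rho><1. \<forall>z. \<rho> < cmod z \<and> cmod z < 1 \<longrightarrow> v z * cmod (deriv (T f) z) < e"
  proof (intro exI[of _ \<rho>] conjI allI impI)
    show "\<rho> < 1" by (rule \<rho>(1))
    fix z assume z: "\<rho> < cmod z \<and> cmod z < 1"
    then have zb: "z \<in> ball 0 1" by simp
    have vz: "v z > 0" by (rule tw_pos[OF v zb])
    have a0: "0 \<le> adj_Kz_norm T X nX z" by (rule adj_nonneg[OF v X TBv M zb])
    have "v z * cmod (deriv (T f) z) \<le> v z * (adj_Kz_norm T X nX z * nX f)"
      using deriv_bound[OF v X T TBv M zb f] vz by (simp add: mult_left_mono)
    also have "\<dots> = (v z * adj_Kz_norm T X nX z) * nX f" by simp
    also have "\<dots> \<le> (v z * adj_Kz_norm T X nX z) * A"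
      using a0 vz unfolding A_def by (intro mult_left_mono) auto
    also have "\<dots> < (e / A) * A" using \<rho>(2) z Apos by (intro mult_strict_right_mono) auto
    also have "\<dots> = e" using Apos by simp
    finally show "v z * cmod (deriv (T f) z) < e" .
  qed
qed

lemma part_iii_ii:
  assumes v: "typical_weight v" and X: "initial_space X nX" and T: "intrinsic T"
    and TBv: "\<forall>f\<in>X. T f \<in> Bv v"
    and M: "\<forall>f\<in>X. Bv_norm v (T f) \<le> M * nX f"
    and H3: "\<forall>e>0. \<exists>\<rho><1. \<forall>z. \<rho> < cmod z \<and> cmod z < 1 \<longrightarrow> v z * adj_Kz_norm T X nX z < e"
  shows "compact_op T X nX v (Bv0 v)"
proof (rule coI)
  fix f assume "f \<in> X" then show "T f \<in> Bv0 v" using part_iii_A[OF v X T TBv M H3] by blast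
next
  fix F :: "nat \<Rightarrow> hfun" assume FX: "\<forall>n. F n \<in> X \<and> nX (F n) \<le> 1"
  obtain \<phi> :: "nat \<Rightarrow> nat" and f where phi: "strict_mono \<phi>" and f: "f \<in> X" and ucf: "uc_conv (F \<circ> \<phi>) f"
    using is_compact[OF X FX] by blast
  define G where "G = (\<lambda>n. F (\<phi> n))"
  have ucG: "uc_conv G f" using ucf unfolding G_def comp_def .
  have GX: "\<And>n. G n \<in> X \<and> nX (G n) \<le> 1" using FX unfolding G_def by blast
  have GHD: "\<forall>n. G n \<in> HD" using GX is_sub[OF X] by blast
  have fHD: "f \<in> HD" by (rule is_sub[OF X f])
  have ucT: "uc_conv (\<lambda>n. T (G n)) (T f)" by (rule intr_cont[OF T GHD fHD ucG])
  have Tf0: "T f \<in> Bv0 v" using part_iii_A[OF v X T TBv M H3 f] .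
  have TfB: "T f \<in> Bv v" using TBv f by blast
  have TGB: "\<And>n. T (G n) \<in> Bv v" using TBv GX by blast
  have nf: "0 \<le> nX f" by (rule is_nonneg[OF X f])
  have lim: "(\<lambda>n. Bv_norm v (\<lambda>z. T (G n) z - T f z)) \<longlonglongrightarrow> 0"
  proof (rule LIMSEQ_I)
    fix \<epsilon> :: real assume eps: "\<epsilon> > 0"
    define A where "A = nX f + 1"
    have Apos: "A > 0" unfolding A_def using nf by simp
    have eA: "\<epsilon> / (4 * A) > 0" using eps Apos by simp
    obtain \<rho> where \<rho>: "\<rho> < 1" "\<forall>z. \<rho> < cmod z \<and> cmod z < 1 \<longrightarrow> v z * adj_Kz_norm T X nX z < \<epsilon> / (4 * A)"
      using H3 eA by blast
    define \<rho>' where "\<rho>' = max \<rho> 0"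
    have r': "0 \<le> \<rho>'" "\<rho>' < 1" "\<rho> \<le> \<rho>'" using \<rho>(1) unfolding \<rho>'_def by auto
    define \<delta> where "\<delta> = (1 - \<rho>') / 2"
    have dpos: "\<delta> > 0" "\<delta> \<le> 1 / 2" using r' unfolding \<delta>_def by auto
    define R where "R = \<rho>' + \<delta>"
    have R1: "R < 1" using r' unfolding R_def \<delta>_def by (simp add: field_simps)
    have Ksub: "cball 0 R \<subseteq> ball 0 1" using R1 by auto
    have ul: "uniform_limit (cball 0 R) (\<lambda>n. T (G n)) (T f) sequentially"
      using ucT Ksub unfolding uc_conv_def by (meson compact_cball)
    have ed: "\<epsilon> * \<delta> / 4 > 0" using eps dpos by simp
    obtain N where N: "\<forall>n\<ge>N. \<forall>w\<in>cball 0 R. dist (T (G n) w) (T f w) < \<epsilon> * \<delta> / 4"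
      using uniform_limitD[OF ul ed] unfolding eventually_sequentially by blast
    show "\<exists>no. \<forall>n\<ge>no. norm (Bv_norm v (\<lambda>z. T (G n) z - T f z) - 0) < \<epsilon>"
    proof (intro exI[of _ N] allI impI)
      fix n assume n: "N \<le> n"
      define D where "D = (\<lambda>z. T (G n) z - T f z)"
      have DB: "D \<in> Bv v" unfolding D_def by (rule Bv_diff[OF v TGB TfB])
      have DHD: "D \<in> HD" by (rule Bv_HD[OF DB])
      have close: "\<And>w. w \<in> cball 0 R \<Longrightarrow> cmod (D w) < \<epsilon> * \<delta> / 4"
        using N n unfolding D_def by (simp add: dist_norm)
      have bnd: "v z * cmod (deriv D z) \<le> \<epsilon> / 4" if zb: "z \<in> ball 0 1" for z
      proof (cases "cmod z \<le> \<rho>'")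
        case True
        have sub: "cball z \<delta> \<subseteq> cball 0 R"
        proof
          fix w assume "w \<in> cball z \<delta>"
          then have "cmod (w - z) \<le> \<delta>" by (simp add: dist_norm norm_minus_commute)
          then have "cmod w \<le> cmod z + \<delta>" using norm_triangle_ineq2[of w z] by linarith
          then show "w \<in> cball 0 R" using True unfolding R_def by simp
        qed
        have hol: "D holomorphic_on ball z \<delta>"
          using HD_holo[OF DHD] sub Ksub ball_subset_cball holomorphic_on_subset
          by (metis (no_types, lifting) order_trans)
        have cont: "continuous_on (cball z \<delta>) D"
          using holomorphic_on_imp_continuous_on[OF HD_holo[OF DHD]] sub Ksub continuous_on_subset
          by (metis (no_types, lifting) order_trans)
        have "norm ((deriv ^^ 1) D z) \<le> fact 1 * (\<epsilon> * \<delta> / 4) / \<delta> ^ 1"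
        proof (rule Cauchy_inequality[OF hol cont dpos(1)])
          fix x assume "norm (z - x) = \<delta>"
          then have "x \<in> cball z \<delta>" by (simp add: dist_norm)
          then have "x \<in> cball 0 R" using sub by blast
          then show "norm (D x) \<le> \<epsilon> * \<delta> / 4" using close less_imp_le by blast
        qed
        then have c: "cmod (deriv D z) \<le> \<epsilon> / 4" using dpos by simp
        have "v z * cmod (deriv D z) \<le> cmod (deriv D z)"
          using tw_pos[OF v zb] tw_le1[OF v zb] by (intro mult_left_le_one_le) auto
        then show ?thesis using c by linarith
      next
        case False
        then have zr: "\<rho> < cmod z \<and> cmod z < 1" using r' zb by simp
        have vz: "v z > 0" by (rule tw_pos[OF v zb])
        have a0: "0 \<le> adj_Kz_norm T X nX z" by (rule adj_nonneg[OF v X TBv M zb])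
        have GXn: "G n \<in> X" "nX (G n) \<le> 1" using GX by blast+
        have d: "deriv D z = deriv (T (G n)) z - deriv (T f) z"
          unfolding D_def by (rule HD_deriv_diff[OF Bv_HD[OF TGB] Bv_HD[OF TfB] zb])
        have "cmod (deriv D z) \<le> cmod (deriv (T (G n)) z) + cmod (deriv (T f) z)"
          unfolding d by (rule norm_triangle_ineq4)
        also have "\<dots> \<le> adj_Kz_norm T X nX z * nX (G n) + adj_Kz_norm T X nX z * nX f"
          using deriv_bound[OF v X T TBv M zb GXn(1)] deriv_bound[OF v X T TBv M zb f] by simp
        also have "\<dots> \<le> adj_Kz_norm T X nX z * 1 + adj_Kz_norm T X nX z * nX f"
          using a0 GXn(2) using mult_left_mono[OF GXn(2) a0] by simp
        also have "\<dots> = adj_Kz_norm T X nX z * A" unfolding A_def by (simp add: algebra_simps)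
        finally have "v z * cmod (deriv D z) \<le> v z * (adj_Kz_norm T X nX z * A)"
          using vz by (simp add: mult_left_mono)
        also have "\<dots> = (v z * adj_Kz_norm T X nX z) * A" by simp
        also have "\<dots> < (\<epsilon> / (4 * A)) * A" using \<rho>(2) zr Apos by (intro mult_strict_right_mono) auto
        also have "\<dots> = \<epsilon> / 4" using Apos by simp
        finally show ?thesis by simp
      qed
      have b: "Bv_norm v D \<le> cmod (D 0) + \<epsilon> / 4" by (rule Bv_norm_le[OF bnd])
      have c: "cmod (D 0) < \<epsilon> * \<delta> / 4" using close r' R1 dpos unfolding R_def by simp
      have d: "\<epsilon> * \<delta> / 4 \<le> \<epsilon> / 8" using dpos eps by simp
      have nn: "0 \<le> Bv_norm v D" by (rule Bv_norm_nonneg[OF v DB])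
      have "Bv_norm v D < \<epsilon>" using b c d eps by linarith
      then show "norm (Bv_norm v (\<lambda>z. T (G n) z - T f z) - 0) < \<epsilon>"
        using nn unfolding D_def by simp
    qed
  qed
  show "\<exists>(\<phi>::nat\<Rightarrow>nat) g. strict_mono \<phi> \<and> g \<in> Bv0 v \<and>
                 (\<lambda>n. Bv_norm v (\<lambda>z. T (F (\<phi> n)) z - g z)) \<longlonglongrightarrow> 0"
    using phi Tf0 lim unfolding G_def by blast
qed

theorem theorem3p4:
  fixes v :: "complex \<Rightarrow> real" and X :: "hfun set" and nX :: "hfun \<Rightarrow> real"
    and T :: "hfun \<Rightarrow> hfun" and C :: real
  assumes "typical_weight v"
    and "initial_space X nX"
    and "\<And>f r. f \<in> X \<Longrightarrow> 0 \<le> r \<Longrightarrow> r < 1 \<Longrightarrow> dil r f \<in> X \<and> nX (dil r f) \<le> C * nX f"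
    and "intrinsic T"
    and "\<forall>f\<in>X. T f \<in> Bv v"
    and "\<exists>M. \<forall>f\<in>X. Bv_norm v (T f) \<le> M * nX f"
    and "\<And>f r. f \<in> X \<Longrightarrow> 0 \<le> r \<Longrightarrow> r < 1 \<Longrightarrow> T (dil r f) \<in> Bv0 v"
  shows "(compact_op T X nX v (Bv v) \<longleftrightarrow> compact_op T X nX v (Bv0 v)) \<and>
         (compact_op T X nX v (Bv0 v) \<longleftrightarrow>
            (\<forall>e>0. \<exists>\<rho><1. \<forall>z. \<rho> < cmod z \<and> cmod z < 1 \<longrightarrow>
                 v z * adj_Kz_norm T X nX z < e))"
proof -
  obtain M where M: "\<forall>f\<in>X. Bv_norm v (T f) \<le> M * nX f" using assms(6) by blast
  have 1: "compact_op T X nX v (Bv v) \<longleftrightarrow> compact_op T X nX v (Bv0 v)"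
  proof
    assume "compact_op T X nX v (Bv v)"
    then show "compact_op T X nX v (Bv0 v)"
      using part_i_ii[OF assms(1) assms(2) assms(3) assms(4) assms(7)] by blast
  next
    assume "compact_op T X nX v (Bv0 v)"
    then show "compact_op T X nX v (Bv v)" by (rule part_ii_i)
  qed
  have 2: "compact_op T X nX v (Bv0 v) \<longleftrightarrow>
            (\<forall>e>0. \<exists>\<rho><1. \<forall>z. \<rho> < cmod z \<and> cmod z < 1 \<longrightarrow>
                 v z * adj_Kz_norm T X nX z < e)"
  proof
    assume "compact_op T X nX v (Bv0 v)"
    then show "\<forall>e>0. \<exists>\<rho><1. \<forall>z. \<rho> < cmod z \<and> cmod z < 1 \<longrightarrow> v z * adj_Kz_norm T X nX z < e"
      by (rule part_ii_iii[OF assms(1) assms(2) assms(5) M])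
  next
    assume "\<forall>e>0. \<exists>\<rho><1. \<forall>z. \<rho> < cmod z \<and> cmod z < 1 \<longrightarrow> v z * adj_Kz_norm T X nX z < e"
    then show "compact_op T X nX v (Bv0 v)"
      by (rule part_iii_ii[OF assms(1) assms(2) assms(4) assms(5) M])
  qed
  from 1 2 show ?thesis by (rule conjI)
qed

end
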